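(* For every sufficiently small fixed $\varepsilon>0$ and $p=n^{-(2/5+\varepsilon)}$, asymptotically almost surely $G\sim\mathbb{G}(n,p)$ has no $K_4$-tiled subgraph on more than $\lceil 1/\varepsilon\rceil$ vertices.
   Context: A graph is $K_4$-tiled if every edge lies in a copy of $K_4$ and the auxiliary graph whose vertices are the copies of $K_4$ (two adjacent iff they share an edge) is connected. *)

theory Defs
  imports Complex_Main
begin

definition all_pairs :: "nat \<Rightarrow> nat set set" where
  "all_pairs n = {e. e \<subseteq> {0..<n} \<and> card e = 2}"

text \<open>Probability that G(n,p) (each of the pairs present independently with probability p)
  has property P; a graph is identified with its edge set.\<close>
definition gnp_prob :: "nat \<Rightarrow> real \<Rightarrow> (nat set set \<Rightarrow> bool) \<Rightarrow> real" where
  "gnp_prob n p P =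
     (\<Sum>E\<in>Pow (all_pairs n).
        if P E then p ^ card E * (1 - p) ^ (card (all_pairs n) - card E) else 0)"

definition is_K4 :: "'a set set \<Rightarrow> 'a set \<Rightarrow> bool" where
  "is_K4 F Q \<longleftrightarrow> card Q = 4 \<and> (\<forall>u\<in>Q. \<forall>v\<in>Q. u \<noteq> v \<longrightarrow> {u, v} \<in> F)"

text \<open>Auxiliary graph: copies of K4, adjacent iff they share an edge (i.e. at least 2 vertices).\<close>
definition K4_adj :: "'a set set \<Rightarrow> ('a set \<times> 'a set) set" where
  "K4_adj F = {(A, B). is_K4 F A \<and> is_K4 F B \<and> card (A \<inter> B) \<ge> 2}"

definition K4_tiled :: "'a set set \<Rightarrow> bool" where
  "K4_tiled F \<longleftrightarrow>
     (\<forall>e\<in>F. \<exists>Q. is_K4 F Q \<and> e \<subseteq> Q) \<and>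
     (\<forall>A B. is_K4 F A \<and> is_K4 F B \<longrightarrow> (A, B) \<in> (K4_adj F)\<^sup>*)"

text \<open>G (edge set E) contains a K4-tiled subgraph on more than k vertices; the subgraph
  is given by its edge set F, its vertices being the endpoints of its edges.\<close>
definition has_big_K4_tiled :: "nat \<Rightarrow> 'a set set \<Rightarrow> bool" where
  "has_big_K4_tiled k E \<longleftrightarrow> (\<exists>F. F \<subseteq> E \<and> K4_tiled F \<and> card (\<Union>F) > k)"

end

theory Submission
  imports Defs
begin


lemma finite_all_pairs: "finite (all_pairs n)"
  unfolding all_pairs_def by (rule finite_subset[of _ "Pow {0..<n}"]) auto

lemma sum_pow_total:
  fixes p q :: real
  assumes "finite A"
  shows "(\<Sum>E\<in>Pow A. p ^ card E * q ^ (card A - card E)) = (p + q) ^ card A"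
proof -
  have "(p+q) ^ card A = (\<Prod>x\<in>A. p + q)" by simp
  also have "\<dots> = (\<Sum>X\<in>Pow A. (\<Prod>x\<in>X. p) * (\<Prod>x\<in>A-X. q))"
    by (rule prod_add[OF assms])
  also have "\<dots> = (\<Sum>E\<in>Pow A. p ^ card E * q ^ (card A - card E))"
    by (rule sum.cong) (auto simp: card_Diff_subset finite_subset[OF _ assms])
  finally show ?thesis by simp
qed

lemma sum_superset:
  fixes p :: real
  assumes A: "finite A" and H: "H \<subseteq> A"
  shows "(\<Sum>E\<in>Pow A. if H \<subseteq> E then p ^ card E * (1-p) ^ (card A - card E) else 0) = p ^ card H"
proof -
  have fH: "finite H" using A H finite_subset by blast
  have "(\<Sum>E\<in>Pow A. if H \<subseteq> E then p ^ card E * (1-p) ^ (card A - card E) else 0)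
      = (\<Sum>E\<in>{E\<in>Pow A. H \<subseteq> E}. p ^ card E * (1-p) ^ (card A - card E))"
    by (simp add: sum.inter_filter[OF finite_Pow_iff[THEN iffD2, OF A], symmetric])
  also have "{E\<in>Pow A. H \<subseteq> E} = (\<lambda>S. S \<union> H) ` Pow (A - H)"
  proof
    show "{E \<in> Pow A. H \<subseteq> E} \<subseteq> (\<lambda>S. S \<union> H) ` Pow (A - H)"
    proof
      fix E assume "E \<in> {E \<in> Pow A. H \<subseteq> E}"
      then have "E = (E - H) \<union> H" "E - H \<in> Pow (A - H)" by auto
      then show "E \<in> (\<lambda>S. S \<union> H) ` Pow (A - H)" by blast
    qed
  qed (use H in auto)
  also have "(\<Sum>E\<in>(\<lambda>S. S \<union> H) ` Pow (A - H). p ^ card E * (1-p) ^ (card A - card E))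
      = (\<Sum>S\<in>Pow (A - H). p ^ card (S \<union> H) * (1-p) ^ (card A - card (S \<union> H)))"
    by (rule sum.reindex_cong[where l="\<lambda>S. S \<union> H"]) (auto simp: inj_on_def)
  also have "\<dots> = (\<Sum>S\<in>Pow (A - H). p ^ card H * (p ^ card S * (1-p) ^ (card (A - H) - card S)))"
  proof (rule sum.cong)
    fix S assume S: "S \<in> Pow (A - H)"
    have fS: "finite S" using S A finite_subset by auto
    have c1: "card (S \<union> H) = card S + card H" using S fS fH by (subst card_Un_disjoint) auto
    have c2: "card (A - H) = card A - card H" using H fH by (simp add: card_Diff_subset)
    show "p ^ card (S \<union> H) * (1-p) ^ (card A - card (S \<union> H)) = p ^ card H * (p ^ card S * (1-p) ^ (card (A - H) - card S))"
      using c1 c2 by (simp add: power_add diff_diff_add add.commute)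
  qed simp
  also have "\<dots> = p ^ card H * (p + (1-p)) ^ card (A - H)"
    by (simp add: sum_distrib_left[symmetric] sum_pow_total A)
  finally show ?thesis by simp
qed

lemma gnp_total: "gnp_prob n p (\<lambda>_. True) = 1"
  unfolding gnp_prob_def using sum_pow_total[OF finite_all_pairs, of p "1-p" n] by simp

lemma gnp_compl: "gnp_prob n p (\<lambda>E. \<not> P E) = 1 - gnp_prob n p P"
proof -
  have "gnp_prob n p (\<lambda>E. \<not> P E) = gnp_prob n p (\<lambda>_. True) - gnp_prob n p P"
    unfolding gnp_prob_def by (subst sum_subtractf[symmetric]) (rule sum.cong, auto)
  then show ?thesis by (simp add: gnp_total)
qed

lemma gnp_union_bound:
  fixes p :: real and h :: "'b \<Rightarrow> nat set set"
  assumes W: "finite W" and p: "0 \<le> p" "p \<le> 1"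
    and cov: "\<And>E. E \<subseteq> all_pairs n \<Longrightarrow> P E \<Longrightarrow> \<exists>x\<in>W. h x \<subseteq> E"
    and hs: "\<And>x. x \<in> W \<Longrightarrow> h x \<subseteq> all_pairs n"
  shows "gnp_prob n p P \<le> (\<Sum>x\<in>W. p ^ card (h x))"
proof -
  let ?A = "all_pairs n"
  let ?w = "\<lambda>E. p ^ card E * (1 - p) ^ (card ?A - card E)"
  have wnn: "?w E \<ge> 0" for E using p by simp
  have "gnp_prob n p P = (\<Sum>E\<in>Pow ?A. if P E then ?w E else 0)" unfolding gnp_prob_def by simp
  also have "\<dots> \<le> (\<Sum>E\<in>Pow ?A. \<Sum>x\<in>W. if h x \<subseteq> E then ?w E else 0)"
  proof (rule sum_mono)
    fix E assume E: "E \<in> Pow ?A"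
    show "(if P E then ?w E else 0) \<le> (\<Sum>x\<in>W. if h x \<subseteq> E then ?w E else 0)"
    proof (cases "P E")
      case True
      then obtain x where x: "x \<in> W" "h x \<subseteq> E" using cov E by blast
      have "?w E = (if h x \<subseteq> E then ?w E else 0)" using x by simp
      also have "\<dots> \<le> (\<Sum>x\<in>W. if h x \<subseteq> E then ?w E else 0)"
        by (rule member_le_sum[OF x(1) _ W]) (simp add: wnn)
      finally show ?thesis using True by simp
    next
      case False then show ?thesis by (auto intro!: sum_nonneg simp: wnn)
    qed
  qed
  also have "\<dots> = (\<Sum>x\<in>W. \<Sum>E\<in>Pow ?A. if h x \<subseteq> E then ?w E else 0)"
    by (rule sum.swap)
  also have "\<dots> = (\<Sum>x\<in>W. p ^ card (h x))"
    by (rule sum.cong) (auto simp: sum_superset[OF finite_all_pairs hs])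
  finally show ?thesis .
qed




definition Fin :: "'a set set \<Rightarrow> 'a set \<Rightarrow> 'a set set" where
  "Fin F U = {e\<in>F. e \<subseteq> U}"

lemma path_exit:
  assumes "(A,B) \<in> (K4_adj F)\<^sup>*" "A \<subseteq> U" "\<not> B \<subseteq> U"
  shows "\<exists>C D. (C,D) \<in> K4_adj F \<and> C \<subseteq> U \<and> \<not> D \<subseteq> U"
  using assms
proof (induction rule: rtrancl_induct)
  case base then show ?case by simp
next
  case (step y z)
  show ?case
  proof (cases "y \<subseteq> U")
    case True then show ?thesis using step by blast
  next
    case False then show ?thesis using step by blast
  qed
qed

lemma K4_sub:
  assumes "is_K4 F Q" shows "Q \<subseteq> \<Union>F"
proof
  fix u assume u: "u \<in> Q"
  have "card Q = 4" using assms by (simp add: is_K4_def)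
  have "Q - {u} \<noteq> {}"
  proof
    assume "Q - {u} = {}"
    then have "Q \<subseteq> {u}" by blast
    then have "card Q \<le> card {u}" by (intro card_mono) auto
    then have "card Q \<le> 1" by simp
    then show False using \<open>card Q = 4\<close> by simp
  qed
  then obtain v where v: "v \<in> Q" "v \<noteq> u" by blast
  then have "{u,v} \<in> F" using assms u by (simp add: is_K4_def)
  then show "u \<in> \<Union>F" by blast
qed

lemma extend:
  assumes fF: "finite F" and T: "K4_tiled F" and KA: "is_K4 F A"
    and AU: "A \<subseteq> U" and UV: "U \<subseteq> \<Union>F" and ne: "U \<noteq> \<Union>F" and fU: "finite U"
    and inv: "5 * card U \<le> 2 * card (Fin F U) + 8"
  shows "\<exists>U'. A \<subseteq> U' \<and> U' \<subseteq> \<Union>F \<and> card U < card U' \<and> card U' \<le> card U + 2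
          \<and> 5 * card U' \<le> 2 * card (Fin F U') + 8"
proof -
  obtain x where x: "x \<in> \<Union>F" "x \<notin> U" using UV ne by blast
  then obtain e where e: "e \<in> F" "x \<in> e" by blast
  then obtain B where B: "is_K4 F B" "e \<subseteq> B" using T unfolding K4_tiled_def by blast
  have nBU: "\<not> B \<subseteq> U" using B e x by blast
  have AB: "(A,B) \<in> (K4_adj F)\<^sup>*" using T KA B unfolding K4_tiled_def by blast
  obtain C D where CD: "(C,D) \<in> K4_adj F" "C \<subseteq> U" "\<not> D \<subseteq> U"
    using path_exit[OF AB AU nBU] by blast
  have KD: "is_K4 F D" and c2: "card (C \<inter> D) \<ge> 2" using CD(1) unfolding K4_adj_def by auto
  have cD: "card D = 4" using KD by (simp add: is_K4_def)
  then have fD: "finite D" by (intro card_ge_0_finite) simp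
  have DV: "D \<subseteq> \<Union>F" using K4_sub[OF KD] .
  have "card (C \<inter> D) \<le> card (D \<inter> U)"
    by (rule card_mono) (use fD CD(2) in auto)
  then have ge2: "card (D \<inter> U) \<ge> 2" using c2 by linarith
  have "card (D \<inter> U) < card D"
    by (rule psubset_card_mono[OF fD]) (use CD(3) in auto)
  then have lt4: "card (D \<inter> U) < 4" using cD by simp
  define U' where "U' = U \<union> D"
  have cDU: "card (D - U) = 4 - card (D \<inter> U)"
    using card_Diff_subset_Int[of D U] fD cD by (simp add: Int_commute)
  have cU': "card U' = card U + card (D - U)"
    proof -
    have eq: "U' = U \<union> (D - U)" unfolding U'_def by blast
    show ?thesis unfolding eq by (rule card_Un_disjoint) (use fU fD in auto)
  qed
  have fFin: "finite (Fin F U')" using fF by (simp add: Fin_def)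
  have sub: "Fin F U \<subseteq> Fin F U'" unfolding Fin_def U'_def by auto
  have edge: "{u,v} \<in> Fin F U'" if "u \<in> D" "v \<in> D" "u \<noteq> v" for u v
    using KD that unfolding is_K4_def Fin_def U'_def by auto
  have notold: "{u,v} \<notin> Fin F U" if "u \<notin> U" for u v
    using that unfolding Fin_def by auto
  have gain: "5 * card (D - U) \<le> 2 * (card (Fin F U') - card (Fin F U))"
  proof (cases "card (D \<inter> U) = 3")
    case True
    then obtain a b c where abc: "D \<inter> U = {a,b,c}" "a \<noteq> b" "b \<noteq> c" "a \<noteq> c"
      by (auto simp: card_3_iff)
    have "card (D - U) = 1" using cDU True by simp
    then obtain y where y: "D - U = {y}" by (auto simp: card_1_singleton_iff)
    have yD: "y \<in> D" "y \<notin> U" using y by auto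
    have abcD: "a \<in> D" "b \<in> D" "c \<in> D" "a \<in> U" "b \<in> U" "c \<in> U" using abc(1) by auto
    let ?N = "{{y,a},{y,b},{y,c}}"
    have Nsub: "?N \<subseteq> Fin F U'" using edge yD abcD by auto
    have Ndisj: "?N \<inter> Fin F U = {}" using notold yD by auto
    have cN: "card ?N = 3" using abc yD abcD by (auto simp: doubleton_eq_iff)
    have "card (Fin F U \<union> ?N) \<le> card (Fin F U')" by (rule card_mono[OF fFin]) (use sub Nsub in auto)
    moreover have "card (Fin F U \<union> ?N) = card (Fin F U) + 3"
      proof -
      have "finite (Fin F U)" using fFin sub finite_subset by blast
      then show ?thesis using card_Un_disjoint[of "Fin F U" ?N] Ndisj cN by (simp add: Int_commute)
    qed
    ultimately show ?thesis using \<open>card (D - U) = 1\<close> by linarith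
  next
    case False
    then have "card (D \<inter> U) = 2" using ge2 lt4 by linarith
    then obtain a b where ab: "D \<inter> U = {a,b}" "a \<noteq> b" by (auto simp: card_2_iff)
    have "card (D - U) = 2" using cDU \<open>card (D \<inter> U) = 2\<close> by simp
    then obtain y z where yz: "D - U = {y,z}" "y \<noteq> z" by (auto simp: card_2_iff)
    have yD: "y \<in> D" "y \<notin> U" "z \<in> D" "z \<notin> U" using yz by auto
    have abD: "a \<in> D" "b \<in> D" "a \<in> U" "b \<in> U" using ab(1) by auto
    let ?N = "{{y,z},{y,a},{y,b},{z,a},{z,b}}"
    have Nsub: "?N \<subseteq> Fin F U'" using edge yD abD yz(2) by auto
    have Ndisj: "?N \<inter> Fin F U = {}" using notold yD by auto
    have ne1: "y \<noteq> a" "y \<noteq> b" "z \<noteq> a" "z \<noteq> b" using yD abD by auto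
    have cN: "card ?N = 5" using ab yz ne1 by (auto simp: doubleton_eq_iff)
    have "card (Fin F U \<union> ?N) \<le> card (Fin F U')" by (rule card_mono[OF fFin]) (use sub Nsub in auto)
    moreover have "card (Fin F U \<union> ?N) = card (Fin F U) + 5"
      proof -
      have "finite (Fin F U)" using fFin sub finite_subset by blast
      then show ?thesis using card_Un_disjoint[of "Fin F U" ?N] Ndisj cN by (simp add: Int_commute)
    qed
    ultimately show ?thesis using \<open>card (D - U) = 2\<close> by linarith
  qed
  have "card (Fin F U) \<le> card (Fin F U')" by (rule card_mono[OF fFin sub])
  then have "5 * card U' \<le> 2 * card (Fin F U') + 8" using inv gain cU' by linarith
  moreover have "A \<subseteq> U'" "U' \<subseteq> \<Union>F" using AU UV DV unfolding U'_def by auto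
  moreover have "card U < card U'" "card U' \<le> card U + 2" using cU' cDU ge2 lt4 by auto
  ultimately show ?thesis by blast
qed

lemma witness:
  assumes fF: "finite F" and T: "K4_tiled F" and fV: "finite (\<Union>F)" and k: "k < card (\<Union>F)"
  shows "\<exists>U. U \<subseteq> \<Union>F \<and> k < card U \<and> card U \<le> k + 4 \<and> 5 * card U \<le> 2 * card (Fin F U) + 8"
proof -
  let ?V = "\<Union>F"
  have "?V \<noteq> {}"
  proof
    assume "?V = {}" then have "card ?V = 0" by (simp only: card.empty)
    then show False using k by simp
  qed
  then obtain x where "x \<in> ?V" by blast
  then obtain e where e: "e \<in> F" "x \<in> e" by blast
  then obtain A where A: "is_K4 F A" "e \<subseteq> A" using T unfolding K4_tiled_def by blast
  have cA: "card A = 4" using A by (simp add: is_K4_def)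
  have AV: "A \<subseteq> ?V" using K4_sub[OF A(1)] .
  have "{B. B \<subseteq> A \<and> card B = 2} \<subseteq> Fin F A"
  proof
    fix B assume "B \<in> {B. B \<subseteq> A \<and> card B = 2}"
    then obtain u v where "B = {u,v}" "u \<noteq> v" "B \<subseteq> A" by (auto simp: card_2_iff)
    then show "B \<in> Fin F A" using A(1) unfolding is_K4_def Fin_def by auto
  qed
  moreover have "card {B. B \<subseteq> A \<and> card B = 2} = 6"
    proof -
    have "finite A" using cA by (intro card_ge_0_finite) simp
    then show ?thesis using n_subsets[of A 2] cA by (simp add: numeral_eq_Suc)
  qed
  moreover have "finite (Fin F A)" using fF by (simp add: Fin_def)
  ultimately have "6 \<le> card (Fin F A)"
    using card_mono[of "Fin F A" "{B. B \<subseteq> A \<and> card B = 2}"] by simp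
  then have invA: "5 * card A \<le> 2 * card (Fin F A) + 8" using cA by simp
  have "\<forall>j. j < card ?V \<longrightarrow> (\<exists>U. A \<subseteq> U \<and> U \<subseteq> ?V \<and> j < card U \<and> card U \<le> max (j+2) 4
           \<and> 5 * card U \<le> 2 * card (Fin F U) + 8)"
  proof
    fix j show "j < card ?V \<longrightarrow> (\<exists>U. A \<subseteq> U \<and> U \<subseteq> ?V \<and> j < card U \<and> card U \<le> max (j+2) 4
           \<and> 5 * card U \<le> 2 * card (Fin F U) + 8)"
    proof (induction j)
      case 0 show ?case using invA cA AV by auto
    next
      case (Suc j)
      show ?case
      proof
        assume lt: "Suc j < card ?V"
        then obtain U where U: "A \<subseteq> U" "U \<subseteq> ?V" "j < card U" "card U \<le> max (j+2) 4"
          "5 * card U \<le> 2 * card (Fin F U) + 8" using Suc by auto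
        show "\<exists>U. A \<subseteq> U \<and> U \<subseteq> ?V \<and> Suc j < card U \<and> card U \<le> max (Suc j+2) 4
           \<and> 5 * card U \<le> 2 * card (Fin F U) + 8"
        proof (cases "Suc j < card U")
          case True then show ?thesis using U by (intro exI[of _ U]) auto
        next
          case False
          then have cU: "card U = Suc j" using U(3) by simp
          have "U \<noteq> ?V" using cU lt by auto
          moreover have "finite U" using U(2) fV finite_subset by blast
          ultimately obtain U' where "A \<subseteq> U'" "U' \<subseteq> ?V" "card U < card U'" "card U' \<le> card U + 2"
            "5 * card U' \<le> 2 * card (Fin F U') + 8"
            using extend[OF fF T A(1) U(1) U(2)] U(5) by blast
          then show ?thesis using cU by (intro exI[of _ U']) auto
        qed
      qed
    qed
  qed
  then obtain U where "U \<subseteq> ?V" "k < card U" "card U \<le> max (k+2) 4" "5 * card U \<le> 2 * card (Fin F U) + 8"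
    using k by blast
  then show ?thesis by (intro exI[of _ U]) auto
qed




lemma cover:
  assumes E: "E \<subseteq> all_pairs n" and big: "has_big_K4_tiled k E"
  shows "\<exists>x\<in>Sigma {U. U \<subseteq> {0..<n} \<and> k < card U \<and> card U \<le> k+4}
              (\<lambda>U. {H. H \<subseteq> {e. e \<subseteq> U \<and> card e = 2} \<and> 5 * card U \<le> 2 * card H + 8}). snd x \<subseteq> E"
proof -
  obtain F where F: "F \<subseteq> E" "K4_tiled F" "k < card (\<Union>F)" using big unfolding has_big_K4_tiled_def by blast
  have FA: "F \<subseteq> all_pairs n" using F E by blast
  have fF: "finite F" using FA finite_all_pairs finite_subset by blast
  have Vn: "\<Union>F \<subseteq> {0..<n}" using FA unfolding all_pairs_def by auto
  then have fV: "finite (\<Union>F)" using finite_subset by blast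
  obtain U where U: "U \<subseteq> \<Union>F" "k < card U" "card U \<le> k + 4" "5 * card U \<le> 2 * card (Fin F U) + 8"
    using witness[OF fF F(2) fV F(3)] by blast
  have "Fin F U \<subseteq> {e. e \<subseteq> U \<and> card e = 2}" using FA unfolding Fin_def all_pairs_def by auto
  moreover have "Fin F U \<subseteq> E" using F unfolding Fin_def by auto
  ultimately show ?thesis using U Vn by (intro bexI[of _ "(U, Fin F U)"]) auto
qed

lemma bound:
  fixes a :: real
  assumes a: "a > 0" and n: "n \<ge> 1"
  shows "gnp_prob n (real n powr (-a)) (has_big_K4_tiled k) \<le>
     (\<Sum>v\<in>{k+1..k+4}. 2^(2^v) * real n powr (real v - a*(5*real v - 8)/2))"
proof -
  define p where "p = real n powr (-a)"
  define Us where "Us = {U. U \<subseteq> {0..<n} \<and> k < card U \<and> card U \<le> k+4}"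
  define Hs where "Hs = (\<lambda>U::nat set. {H. H \<subseteq> {e. e \<subseteq> U \<and> card e = 2} \<and> 5 * card U \<le> 2 * card H + 8})"
  define f where "f = (\<lambda>v::nat. 2^(2^v) * real n powr (- a*(5*real v - 8)/2))"
  have n1: "real n \<ge> 1" using n by simp
  have p0: "0 \<le> p" unfolding p_def by simp
  have p1: "p \<le> 1" unfolding p_def using powr_mono[of "-a" 0 "real n"] n1 a by simp
  have fUs: "finite Us" unfolding Us_def by (rule finite_subset[of _ "Pow {0..<n}"]) auto
  have fUs': "finite U" if "U \<in> Us" for U using that unfolding Us_def using finite_subset by blast
  have HsP: "Hs U \<subseteq> Pow (Pow U)" for U unfolding Hs_def by auto
  have fHs: "finite (Hs U)" if "U \<in> Us" for U using HsP fUs'[OF that] finite_subset by blast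
  have "gnp_prob n p (has_big_K4_tiled k) \<le> (\<Sum>x\<in>Sigma Us Hs. p ^ card (snd x))"
  proof (rule gnp_union_bound)
    show "finite (Sigma Us Hs)" using fUs fHs by auto
    show "\<And>E. E \<subseteq> all_pairs n \<Longrightarrow> has_big_K4_tiled k E \<Longrightarrow> \<exists>x\<in>Sigma Us Hs. snd x \<subseteq> E"
      using cover unfolding Us_def Hs_def by blast
    show "\<And>x. x \<in> Sigma Us Hs \<Longrightarrow> snd x \<subseteq> all_pairs n"
      unfolding Us_def Hs_def all_pairs_def by fastforce
  qed (use p0 p1 in auto)
  also have "\<dots> = (\<Sum>U\<in>Us. \<Sum>H\<in>Hs U. p ^ card H)"
    using sum.Sigma[of Us Hs "\<lambda>U H. p ^ card H"] fUs fHs by (simp add: case_prod_beta)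
  also have "\<dots> \<le> (\<Sum>U\<in>Us. f (card U))"
  proof (rule sum_mono)
    fix U assume U: "U \<in> Us"
    have "(\<Sum>H\<in>Hs U. p ^ card H) \<le> (\<Sum>H\<in>Hs U. real n powr (- a*(5*real (card U) - 8)/2))"
    proof (rule sum_mono)
      fix H assume H: "H \<in> Hs U"
      have "p ^ card H = real n powr (-a * real (card H))"
        unfolding p_def using n1 by (simp add: powr_realpow[symmetric] powr_powr)
      also have "\<dots> \<le> real n powr (- a*(5*real (card U) - 8)/2)"
      proof (rule powr_mono[OF _ n1])
        have "5 * real (card U) \<le> 2 * real (card H) + 8" proof -
          have "5 * card U \<le> 2 * card H + 8" using H unfolding Hs_def by simp
          then have "real (5 * card U) \<le> real (2 * card H + 8)" by (simp only: of_nat_le_iff)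
          then show ?thesis by simp
        qed
        then have "a * (5*real (card U)) \<le> a * (2 * real (card H) + 8)" using a by (intro mult_left_mono) auto
        then show "-a * real (card H) \<le> - a*(5*real (card U) - 8)/2"
          by (simp add: field_simps)
      qed
      finally show "p ^ card H \<le> real n powr (- a*(5*real (card U) - 8)/2)" .
    qed
    also have "\<dots> = real (card (Hs U)) * real n powr (- a*(5*real (card U) - 8)/2)" by simp
    also have "\<dots> \<le> f (card U)" unfolding f_def
    proof (rule mult_right_mono)
      have "card (Hs U) \<le> card (Pow (Pow U))" by (rule card_mono) (use HsP fUs'[OF U] in auto)
      also have "\<dots> = 2^(2^card U)" using fUs'[OF U] by (simp add: card_Pow)
      finally show "real (card (Hs U)) \<le> 2^(2^card U)" by (metis of_nat_le_iff of_nat_numeral of_nat_power)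
    qed simp
    finally show "(\<Sum>H\<in>Hs U. p ^ card H) \<le> f (card U)" .
  qed
  also have "\<dots> = (\<Sum>v\<in>{k+1..k+4}. \<Sum>U\<in>{U\<in>Us. card U = v}. f (card U))"
    by (rule sum.group[symmetric]) (use fUs in \<open>auto simp: Us_def\<close>)
  also have "\<dots> \<le> (\<Sum>v\<in>{k+1..k+4}. 2^(2^v) * real n powr (real v - a*(5*real v - 8)/2))"
  proof (rule sum_mono)
    fix v assume v: "v \<in> {k+1..k+4}"
    have "(\<Sum>U\<in>{U\<in>Us. card U = v}. f (card U)) = real (card {U\<in>Us. card U = v}) * f v" by simp
    also have "\<dots> \<le> real (n ^ v) * f v"
    proof (rule mult_right_mono)
      have "card {U\<in>Us. card U = v} \<le> card {U. U \<subseteq> {0..<n} \<and> card U = v}"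
        by (rule card_mono) (auto simp: Us_def)
      also have "\<dots> = n choose v" using n_subsets[of "{0..<n}" v] by simp
      also have "\<dots> \<le> n ^ v"
        by (cases "v \<le> n") (auto simp: binomial_le_pow binomial_eq_0)
      finally show "real (card {U\<in>Us. card U = v}) \<le> real (n ^ v)" by simp
    qed (simp add: f_def)
    also have "\<dots> = 2^(2^v) * real n powr (real v - a*(5*real v - 8)/2)"
    proof -
      have nv: "real (n^v) = real n powr real v" using n1 by (simp add: powr_realpow)
      have "real (n ^ v) * f v = 2^(2^v) * (real n powr real v * real n powr (- a*(5*real v - 8)/2))"
        unfolding nv f_def by (simp only: mult_ac)
      also have "real n powr real v * real n powr (- a*(5*real v - 8)/2) = real n powr (real v + - a*(5*real v - 8)/2)"
        by (rule powr_add[symmetric])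
      also have "real v + - a*(5*real v - 8)/2 = real v - a*(5*real v - 8)/2" by simp
      finally show ?thesis .
    qed
    finally show "(\<Sum>U\<in>{U\<in>Us. card U = v}. f (card U)) \<le> 2^(2^v) * real n powr (real v - a*(5*real v - 8)/2)" .
  qed
  finally show ?thesis unfolding p_def .
qed




lemma gnp_nonneg: "0 \<le> p \<Longrightarrow> p \<le> 1 \<Longrightarrow> 0 \<le> gnp_prob n p P"
  unfolding gnp_prob_def by (intro sum_nonneg) auto

theorem claim7p4:
  shows "\<exists>\<epsilon>0>0. \<forall>\<epsilon>::real. 0 < \<epsilon> \<and> \<epsilon> < \<epsilon>0 \<longrightarrow>
     (\<lambda>n. gnp_prob n (real n powr (-(2/5 + \<epsilon>)))
             (\<lambda>E. \<not> has_big_K4_tiled (nat \<lceil>1 / \<epsilon>\<rceil>) E)) \<longlonglongrightarrow> 1"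
proof (intro exI[of _ "1/5::real"] conjI allI impI)
  fix \<epsilon> :: real assume e: "0 < \<epsilon> \<and> \<epsilon> < 1/5"
  define k where "k = nat \<lceil>1 / \<epsilon>\<rceil>"
  define a where "a = 2/5 + \<epsilon>"
  have a: "a > 0" using e by (simp add: a_def)
  have kge: "real k \<ge> 1/\<epsilon>" unfolding k_def by (rule real_nat_ceiling_ge)
  define B where "B = (\<lambda>n::nat. \<Sum>v\<in>{k+1..k+4}. 2^(2^v) * real n powr (real v - a*(5*real v - 8)/2))"
  have neg: "real v - a*(5*real v - 8)/2 < 0" if v: "v \<in> {k+1..k+4}" for v
  proof -
    have "real v \<ge> real k + 1" using v by auto
    then have "\<epsilon> * real v \<ge> \<epsilon> * (1/\<epsilon> + 1)" using kge e by (intro mult_left_mono) auto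
    moreover have "\<epsilon> * (1/\<epsilon> + 1) = 1 + \<epsilon>" using e by (simp add: field_simps)
    ultimately have ev: "\<epsilon> * real v > 1" using e by linarith
    have "real v - a*(5*real v - 8)/2 = 8/5 + 4*\<epsilon> - 5/2 * (\<epsilon> * real v)"
      unfolding a_def by (simp add: field_simps)
    then show ?thesis using ev e by linarith
  qed
  have B0: "B \<longlonglongrightarrow> 0" unfolding B_def
  proof (rule tendsto_null_sum)
    fix v assume "v \<in> {k+1..k+4}"
    then have "(\<lambda>n. real n powr (real v - a*(5*real v - 8)/2)) \<longlonglongrightarrow> 0"
      using neg by (intro tendsto_neg_powr filterlim_real_sequentially) auto
    then show "(\<lambda>n. 2^(2^v) * real n powr (real v - a*(5*real v - 8)/2)) \<longlonglongrightarrow> 0"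
      by (rule tendsto_mult_right_zero)
  qed
  have ev: "eventually (\<lambda>n. 0 \<le> gnp_prob n (real n powr (-a)) (has_big_K4_tiled k)
          \<and> gnp_prob n (real n powr (-a)) (has_big_K4_tiled k) \<le> B n) sequentially"
  proof (rule eventually_sequentiallyI[of 1])
    fix n :: nat assume n: "n \<ge> 1"
    have "real n powr (-a) \<le> 1" using powr_mono[of "-a" 0 "real n"] n a by simp
    then show "0 \<le> gnp_prob n (real n powr (-a)) (has_big_K4_tiled k)
          \<and> gnp_prob n (real n powr (-a)) (has_big_K4_tiled k) \<le> B n"
      using bound[OF a n, of k] gnp_nonneg[of "real n powr (-a)"] unfolding B_def by auto
  qed
  have "(\<lambda>n. gnp_prob n (real n powr (-a)) (has_big_K4_tiled k)) \<longlonglongrightarrow> 0"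
    by (rule tendsto_sandwich[OF _ _ tendsto_const B0]) (use ev in \<open>auto elim: eventually_mono\<close>)
  then have "(\<lambda>n. 1 - gnp_prob n (real n powr (-a)) (has_big_K4_tiled k)) \<longlonglongrightarrow> 1 - 0"
    by (intro tendsto_diff tendsto_const)
  then show "(\<lambda>n. gnp_prob n (real n powr (-(2/5 + \<epsilon>)))
             (\<lambda>E. \<not> has_big_K4_tiled (nat \<lceil>1 / \<epsilon>\<rceil>) E)) \<longlonglongrightarrow> 1"
    unfolding a_def k_def by (simp add: gnp_compl)
qed (simp)


end
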